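(* Assume $f$ has a unique global maximizer, contains no weak epistasis, and every order-1 epistasis of $f$ is strict. If the maximum in-degree of the epistatic graph is $k$, then every strongly connected component of the epistatic graph has size at most $k+1$, and consequently the decomposition difficulty is at most $k+1$.
   Context: Fix $\ell\ge1$, loci $V=\{0,\dots,\ell-1\}$, chromosomes $\vec y\in\{0,1\}^V$, fitness $f:\{0,1\}^V\to\mathbb R$ (maximized) with unique global maximizer $g$. An assignment $A$ is a set of pairs $(v,a)$ with at most one pair per locus; coverage $\mathcal C(A)$; $A[v]$ its allele at $v$. $\Psi_A$ is the set of chromosomes agreeing with $A$ on $\mathcal C(A)$ with maximum fitness among such chromosomes; $\Psi_A[v]=\{\psi_v:\psi\in\Psi_A\}$. Epistasis: for $v\in V$ and nonempty $S\subseteq V\setminus\{v\}$, $S\Rightarrow v$ iff for every $s\in S$ there exists an assignment $A$ with $\mathcal C(A)=S$ and $\Psi_A[v]\neq\Psi_{A\setminus\{(s,A[s])\}}[v]$. An epistasis $S\Rightarrow v$ with $|S|\ge2$ is weak if no nonempty proper subset $T\subsetneq S$ has $T\Rightarrow v$. An order-1 epistasis $\{u\}\Rightarrow v$ is strict if $\Psi_{\{(u,1-g[u])\}}[v]=\{1-g[v]\}$. The epistatic graph (EG) is the directed graph on $V$ with edge $u\to v$ iff $\{u\}\Rightarrow v$. The decomposition difficulty is $\max(k_{SCC},k_{in}+1)$, where $k_{SCC}$ is the maximum size of a strongly connected component of the EG and $k_{in}$ its maximum in-degree. *)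

theory Defs
  imports Complex_Main
begin

text \<open>Loci are V = {0..<l}. A chromosome is a function nat => nat with values in {0,1}
  on V and value 0 outside V (so chromosomes correspond bijectively to {0,1}^V).\<close>

definition chroms :: "nat \<Rightarrow> (nat \<Rightarrow> nat) set" where
  "chroms l = {y. (\<forall>i<l. y i \<in> {0,1}) \<and> (\<forall>i\<ge>l. y i = 0)}"

definition assignment :: "nat \<Rightarrow> (nat \<times> nat) set \<Rightarrow> bool" where
  "assignment l A \<longleftrightarrow> A \<subseteq> {0..<l} \<times> {0,1} \<and>
     (\<forall>v a b. (v,a) \<in> A \<longrightarrow> (v,b) \<in> A \<longrightarrow> a = b)"

definition coverage :: "(nat \<times> nat) set \<Rightarrow> nat set" where
  "coverage A = fst ` A"

definition alleleOf :: "(nat \<times> nat) set \<Rightarrow> nat \<Rightarrow> nat" where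
  "alleleOf A v = (THE a. (v,a) \<in> A)"

definition agrees :: "(nat \<Rightarrow> nat) \<Rightarrow> (nat \<times> nat) set \<Rightarrow> bool" where
  "agrees y A \<longleftrightarrow> (\<forall>(v,a)\<in>A. y v = a)"

definition Psi :: "nat \<Rightarrow> ((nat \<Rightarrow> nat) \<Rightarrow> real) \<Rightarrow> (nat \<times> nat) set \<Rightarrow> (nat \<Rightarrow> nat) set" where
  "Psi l f A = {y \<in> chroms l. agrees y A \<and> (\<forall>z \<in> chroms l. agrees z A \<longrightarrow> f z \<le> f y)}"

definition PsiAt :: "nat \<Rightarrow> ((nat \<Rightarrow> nat) \<Rightarrow> real) \<Rightarrow> (nat \<times> nat) set \<Rightarrow> nat \<Rightarrow> nat set" where
  "PsiAt l f A v = (\<lambda>y. y v) ` Psi l f A"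

definition epistasis :: "nat \<Rightarrow> ((nat \<Rightarrow> nat) \<Rightarrow> real) \<Rightarrow> nat set \<Rightarrow> nat \<Rightarrow> bool" where
  "epistasis l f S v \<longleftrightarrow> v < l \<and> S \<noteq> {} \<and> S \<subseteq> {0..<l} - {v} \<and>
     (\<forall>s\<in>S. \<exists>A. assignment l A \<and> coverage A = S \<and>
        PsiAt l f A v \<noteq> PsiAt l f (A - {(s, alleleOf A s)}) v)"

definition weak_epistasis :: "nat \<Rightarrow> ((nat \<Rightarrow> nat) \<Rightarrow> real) \<Rightarrow> nat set \<Rightarrow> nat \<Rightarrow> bool" where
  "weak_epistasis l f S v \<longleftrightarrow> epistasis l f S v \<and> card S \<ge> 2 \<and>
     \<not> (\<exists>T. T \<noteq> {} \<and> T \<subset> S \<and> epistasis l f T v)"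

definition strict_epistasis ::
  "nat \<Rightarrow> ((nat \<Rightarrow> nat) \<Rightarrow> real) \<Rightarrow> (nat \<Rightarrow> nat) \<Rightarrow> nat \<Rightarrow> nat \<Rightarrow> bool" where
  "strict_epistasis l f g u v \<longleftrightarrow> epistasis l f {u} v \<and>
     PsiAt l f {(u, 1 - g u)} v = {1 - g v}"

definition unique_global_max :: "nat \<Rightarrow> ((nat \<Rightarrow> nat) \<Rightarrow> real) \<Rightarrow> (nat \<Rightarrow> nat) \<Rightarrow> bool" where
  "unique_global_max l f g \<longleftrightarrow> g \<in> chroms l \<and> (\<forall>y\<in>chroms l. y \<noteq> g \<longrightarrow> f y < f g)"

definition EG :: "nat \<Rightarrow> ((nat \<Rightarrow> nat) \<Rightarrow> real) \<Rightarrow> (nat \<times> nat) set" where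
  "EG l f = {(u,v). u < l \<and> v < l \<and> epistasis l f {u} v}"

definition scc_of :: "nat \<Rightarrow> ((nat \<Rightarrow> nat) \<Rightarrow> real) \<Rightarrow> nat \<Rightarrow> nat set" where
  "scc_of l f u = {w. w < l \<and> (u,w) \<in> (EG l f)\<^sup>* \<and> (w,u) \<in> (EG l f)\<^sup>*}"

definition in_degree :: "nat \<Rightarrow> ((nat \<Rightarrow> nat) \<Rightarrow> real) \<Rightarrow> nat \<Rightarrow> nat" where
  "in_degree l f v = card {u. (u,v) \<in> EG l f}"

definition k_in :: "nat \<Rightarrow> ((nat \<Rightarrow> nat) \<Rightarrow> real) \<Rightarrow> nat" where
  "k_in l f = Max (in_degree l f ` {0..<l})"

definition k_SCC :: "nat \<Rightarrow> ((nat \<Rightarrow> nat) \<Rightarrow> real) \<Rightarrow> nat" where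
  "k_SCC l f = Max ((\<lambda>u. card (scc_of l f u)) ` {0..<l})"

definition decomposition_difficulty :: "nat \<Rightarrow> ((nat \<Rightarrow> nat) \<Rightarrow> real) \<Rightarrow> nat" where
  "decomposition_difficulty l f = max (k_SCC l f) (k_in l f + 1)"

end

theory Submission
  imports Defs
begin

lemma psi_empty:
  assumes "unique_global_max l f g"
  shows "Psi l f {} = {g}"
proof -
  have g: "g \<in> chroms l" and lt: "\<forall>y\<in>chroms l. y \<noteq> g \<longrightarrow> f y < f g"
    using assms unfolding unique_global_max_def by auto
  have "y \<in> Psi l f {} \<longleftrightarrow> y = g" for y
  proof
    assume "y \<in> Psi l f {}"
    then have "y \<in> chroms l" "f g \<le> f y" using g unfolding Psi_def agrees_def by auto
    then show "y = g" using lt by force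
  next
    assume "y = g"
    then show "y \<in> Psi l f {}" using g lt unfolding Psi_def agrees_def by (auto simp: less_eq_real_def)
  qed
  then show ?thesis by blast
qed

lemma img_const: "\<forall>x\<in>A. h x = c \<Longrightarrow> a \<in> A \<Longrightarrow> h ` A = {c}" by auto

lemma g01: assumes "unique_global_max l f g" "x < l" shows "g x \<in> {0,1}"
  using assms unfolding unique_global_max_def chroms_def by auto

lemma edge_le:
  assumes ug: "unique_global_max l f g"
    and st: "\<forall>u v. epistasis l f {u} v \<longrightarrow> strict_epistasis l f g u v"
    and e: "(c,b) \<in> EG l f"
    and chi: "\<chi> \<in> Psi l f {(c, 1 - g c)}" and phi: "\<phi> \<in> Psi l f {(b, 1 - g b)}"
  shows "f \<chi> \<le> f \<phi> \<and> (f \<chi> = f \<phi> \<longrightarrow> \<chi> \<in> Psi l f {(b, 1 - g b)})"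
proof -
  have "epistasis l f {c} b" using e unfolding EG_def by auto
  then have "PsiAt l f {(c, 1 - g c)} b = {1 - g b}" using st unfolding strict_epistasis_def by auto
  then have "\<chi> b = 1 - g b" using chi unfolding PsiAt_def by auto
  then have ag: "agrees \<chi> {(b, 1 - g b)}" unfolding agrees_def by auto
  have ch: "\<chi> \<in> chroms l" using chi unfolding Psi_def by auto
  have le: "f \<chi> \<le> f \<phi>" using phi ag ch unfolding Psi_def by auto
  moreover have "f \<chi> = f \<phi> \<longrightarrow> \<chi> \<in> Psi l f {(b, 1 - g b)}"
    using phi ag ch unfolding Psi_def by auto
  ultimately show ?thesis by blast
qed

lemma nonempty_psi:
  assumes st: "\<forall>u v. epistasis l f {u} v \<longrightarrow> strict_epistasis l f g u v"
    and e: "(c,b) \<in> EG l f"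
  shows "\<exists>\<chi>. \<chi> \<in> Psi l f {(c, 1 - g c)}"
proof -
  have "epistasis l f {c} b" using e unfolding EG_def by auto
  then have "PsiAt l f {(c, 1 - g c)} b = {1 - g b}" using st unfolding strict_epistasis_def by auto
  then show ?thesis unfolding PsiAt_def by auto
qed

lemma path_le:
  assumes ug: "unique_global_max l f g"
    and st: "\<forall>u v. epistasis l f {u} v \<longrightarrow> strict_epistasis l f g u v"
    and p: "(a,b) \<in> (EG l f)\<^sup>+"
  shows "\<forall>\<psi> \<in> Psi l f {(a, 1 - g a)}. \<forall>\<phi> \<in> Psi l f {(b, 1 - g b)}.
           f \<psi> \<le> f \<phi> \<and> (f \<psi> = f \<phi> \<longrightarrow> \<psi> \<in> Psi l f {(b, 1 - g b)})"
  using p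
proof (induction rule: trancl_induct)
  case (base y)
  then show ?case using edge_le[OF ug st] by blast
next
  case (step c b)
  show ?case
  proof (intro ballI)
    fix \<psi> \<phi> assume psi: "\<psi> \<in> Psi l f {(a, 1 - g a)}" and phi: "\<phi> \<in> Psi l f {(b, 1 - g b)}"
    obtain \<chi> where chi: "\<chi> \<in> Psi l f {(c, 1 - g c)}" using nonempty_psi[OF st step(2)] by blast
    have 1: "f \<psi> \<le> f \<chi> \<and> (f \<psi> = f \<chi> \<longrightarrow> \<psi> \<in> Psi l f {(c, 1 - g c)})"
      using step(3) psi chi by blast
    have 2: "f \<chi> \<le> f \<phi>" using edge_le[OF ug st step(2) chi phi] by blast
    have 3: "f \<psi> = f \<phi> \<longrightarrow> \<psi> \<in> Psi l f {(b, 1 - g b)}"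
    proof
      assume eq: "f \<psi> = f \<phi>"
      then have "f \<psi> = f \<chi>" using 1 2 by linarith
      then have "\<psi> \<in> Psi l f {(c, 1 - g c)}" using 1 by blast
      then show "\<psi> \<in> Psi l f {(b, 1 - g b)}" using edge_le[OF ug st step(2) _ phi] eq by blast
    qed
    show "f \<psi> \<le> f \<phi> \<and> (f \<psi> = f \<phi> \<longrightarrow> \<psi> \<in> Psi l f {(b, 1 - g b)})"
      using 1 2 3 by linarith
  qed
qed

lemma scc_edge:
  assumes ug: "unique_global_max l f g"
    and st: "\<forall>u v. epistasis l f {u} v \<longrightarrow> strict_epistasis l f g u v"
    and xl: "x < l" and yl: "y < l" and ne: "x \<noteq> y"
    and p1: "(x,y) \<in> (EG l f)\<^sup>*" and p2: "(y,x) \<in> (EG l f)\<^sup>*"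
  shows "(x,y) \<in> EG l f"
proof -
  have t1: "(x,y) \<in> (EG l f)\<^sup>+" using p1 ne by (simp add: rtrancl_eq_or_trancl)
  have t2: "(y,x) \<in> (EG l f)\<^sup>+" using p2 ne by (simp add: rtrancl_eq_or_trancl)
  obtain x' where "(x,x') \<in> EG l f" using t1 by (meson tranclD)
  then obtain \<psi>0 where psi0: "\<psi>0 \<in> Psi l f {(x, 1 - g x)}" using nonempty_psi[OF st] by blast
  obtain y' where "(y,y') \<in> EG l f" using t2 by (meson tranclD)
  then obtain \<phi> where phi: "\<phi> \<in> Psi l f {(y, 1 - g y)}" using nonempty_psi[OF st] by blast
  have all: "\<forall>\<psi>\<in>Psi l f {(x, 1 - g x)}. \<psi> y = 1 - g y"
  proof
    fix \<psi> assume psi: "\<psi> \<in> Psi l f {(x, 1 - g x)}"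
    have a: "f \<psi> \<le> f \<phi> \<and> (f \<psi> = f \<phi> \<longrightarrow> \<psi> \<in> Psi l f {(y, 1 - g y)})"
      using path_le[OF ug st t1] psi phi by blast
    have b: "f \<phi> \<le> f \<psi>" using path_le[OF ug st t2] psi phi by blast
    have "\<psi> \<in> Psi l f {(y, 1 - g y)}" using a b by linarith
    then show "\<psi> y = 1 - g y" unfolding Psi_def agrees_def by auto
  qed
  have pa: "PsiAt l f {(x, 1 - g x)} y = {1 - g y}"
  proof -
    have "\<psi>0 y = 1 - g y" using all psi0 by blast
    show ?thesis unfolding PsiAt_def by (rule img_const[OF all psi0])
  qed
  have p0: "PsiAt l f {} y = {g y}" using psi_empty[OF ug] unfolding PsiAt_def by auto
  have gx: "g x \<in> {0,1}" and gy: "g y \<in> {0,1}" using g01[OF ug] xl yl by auto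
  have asg: "assignment l {(x, 1 - g x)}" unfolding assignment_def using xl gx by auto
  have cov: "coverage {(x, 1 - g x)} = {x}" unfolding coverage_def by auto
  have al: "alleleOf {(x, 1 - g x)} x = 1 - g x" unfolding alleleOf_def by auto
  have neq: "{1 - g y} \<noteq> {g y}" using gy by auto
  have "epistasis l f {x} y"
    unfolding epistasis_def
    using yl xl ne asg cov al pa p0 neq
    by (intro conjI; auto intro!: exI[of _ "{(x, 1 - g x)}"])
  then show ?thesis unfolding EG_def using xl yl by auto
qed

theorem theorem8:
  fixes l :: nat and f :: "(nat \<Rightarrow> nat) \<Rightarrow> real" and g :: "nat \<Rightarrow> nat" and k :: nat
  assumes "l \<ge> 1"
    and "unique_global_max l f g"
    and "\<forall>S v. \<not> weak_epistasis l f S v"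
    and "\<forall>u v. epistasis l f {u} v \<longrightarrow> strict_epistasis l f g u v"
    and "k_in l f = k"
  shows "(\<forall>u<l. card (scc_of l f u) \<le> k + 1) \<and> decomposition_difficulty l f \<le> k + 1"
proof -
  have A: "\<forall>u<l. card (scc_of l f u) \<le> k + 1"
  proof (intro allI impI)
    fix u assume ul: "u < l"
    let ?X = "{w. (w,u) \<in> EG l f}"
    have fin: "finite ?X" by (rule finite_subset[of _ "{0..<l}"]) (auto simp: EG_def)
    have sub: "scc_of l f u \<subseteq> insert u ?X"
      using scc_edge[OF assms(2) assms(4)] ul unfolding scc_of_def by auto
    have "card (scc_of l f u) \<le> card (insert u ?X)" using sub fin by (intro card_mono) auto
    also have "\<dots> \<le> card ?X + 1" using fin by (simp add: card_insert_if)
    also have "card ?X \<le> k_in l f" unfolding k_in_def in_degree_def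
      using ul by (intro Max_ge) auto
    finally show "card (scc_of l f u) \<le> k + 1" using assms(5) by simp
  qed
  have "k_SCC l f \<le> k + 1" unfolding k_SCC_def using A assms(1)
    by (subst Max_le_iff) auto
  then show ?thesis using A assms(5) unfolding decomposition_difficulty_def by simp
qed

end
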